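(* There exists a sequence of graphs $(G_n)$, defined for all sufficiently large $n$, with the following property. For all constants $\delta>0$ and $\gamma>0$: if $\mathcal C_n$ is any non-overlapping clustering of $G_n$ in which every cluster induces a subgraph of density at least $\delta$, then the fraction of maximal cliques $D$ of $G_n$ for which there is a cluster $C\in\mathcal C_n$ with $|C\cap D|\ge\gamma|D|$ tends to $0$ as $n\to\infty$.
   Context: A cluster of a graph is a nonempty vertex subset; a non-overlapping clustering is a collection of clusters in which each vertex lies in exactly one cluster. For a graph with $n'\ge 2$ vertices and $m'$ edges its density is $m'/\binom{n'}{2}$; a one-vertex graph has density $1$. A clustering partially covers a clique $D$ if some cluster contains a constant fraction of the vertices of $D$. *)

theory Defs
  imports Complex_Main
begin

text \<open>A finite simple graph on natural-number vertices: a vertex set and a set of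
  2-element edges contained in it.\<close>
type_synonym graph = "nat set \<times> nat set set"

definition verts :: "graph \<Rightarrow> nat set" where "verts G = fst G"
definition edges :: "graph \<Rightarrow> nat set set" where "edges G = snd G"

definition simple_graph :: "graph \<Rightarrow> bool" where
  "simple_graph G \<longleftrightarrow> finite (verts G) \<and>
     (\<forall>e\<in>edges G. \<exists>u v. u \<noteq> v \<and> e = {u, v} \<and> u \<in> verts G \<and> v \<in> verts G)"

definition is_clique :: "graph \<Rightarrow> nat set \<Rightarrow> bool" where
  "is_clique G D \<longleftrightarrow> D \<subseteq> verts G \<and> (\<forall>u\<in>D. \<forall>v\<in>D. u \<noteq> v \<longrightarrow> {u, v} \<in> edges G)"

definition maximal_clique :: "graph \<Rightarrow> nat set \<Rightarrow> bool" where
  "maximal_clique G D \<longleftrightarrow> is_clique G D \<and> (\<forall>D'. is_clique G D' \<and> D \<subseteq> D' \<longrightarrow> D' = D)"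

definition maximal_cliques :: "graph \<Rightarrow> nat set set" where
  "maximal_cliques G = {D. maximal_clique G D}"

definition clustering :: "graph \<Rightarrow> nat set set \<Rightarrow> bool" where
  "clustering G \<C> \<longleftrightarrow> (\<forall>C\<in>\<C>. C \<noteq> {} \<and> C \<subseteq> verts G) \<and>
     (\<forall>v\<in>verts G. \<exists>!C. C \<in> \<C> \<and> v \<in> C)"

definition induced_density :: "graph \<Rightarrow> nat set \<Rightarrow> real" where
  "induced_density G C =
     (if card C \<le> 1 then 1
      else real (card {e \<in> edges G. e \<subseteq> C}) / real (card C choose 2))"

definition covered_fraction :: "graph \<Rightarrow> nat set set \<Rightarrow> real \<Rightarrow> real" where
  "covered_fraction G \<C> \<gamma> =
     real (card {D \<in> maximal_cliques G. \<exists>C\<in>\<C>. real (card (C \<inter> D)) \<ge> \<gamma> * real (card D)})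
     / real (card (maximal_cliques G))"

end

theory Submission
  imports Defs "HOL-Library.Countable"
begin


lemma bonferroni:
  fixes A :: "'b \<Rightarrow> 'a set" and g :: real
  assumes "finite F" "\<And>D. D \<in> F \<Longrightarrow> finite (A D)"
    "\<And>D. D \<in> F \<Longrightarrow> g \<le> real (card (A D))"
    "\<And>D D'. D \<in> F \<Longrightarrow> D' \<in> F \<Longrightarrow> D \<noteq> D' \<Longrightarrow> card (A D \<inter> A D') \<le> 1"
  shows "real (card F) * g - real (card F) * (real (card F) - 1) / 2 \<le> real (card (\<Union>D\<in>F. A D))"
  using assms
proof (induction F rule: finite_induct)
  case empty
  then show ?case by simp
next
  case (insert D F)
  let ?U = "\<Union>D\<in>F. A D"
  have P1: "\<And>X. X \<in> insert D F \<Longrightarrow> finite (A X)" by (rule insert.prems(1))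
  have P2: "\<And>X. X \<in> insert D F \<Longrightarrow> g \<le> real (card (A X))" by (rule insert.prems(2))
  have P3: "\<And>X Y. X \<in> insert D F \<Longrightarrow> Y \<in> insert D F \<Longrightarrow> X \<noteq> Y \<Longrightarrow> card (A X \<inter> A Y) \<le> 1" by (rule insert.prems(3))
  have finU: "finite ?U" using insert.hyps(1) P1 by blast
  have finD: "finite (A D)" using P1 by blast
  have IH: "real (card F) * g - real (card F) * (real (card F) - 1) / 2 \<le> real (card ?U)"
  proof -
    have Q1: "\<And>X. X \<in> F \<Longrightarrow> finite (A X)" using P1 by blast
    have Q2: "\<And>X. X \<in> F \<Longrightarrow> g \<le> real (card (A X))" using P2 by blast
    have Q3: "\<And>X Y. X \<in> F \<Longrightarrow> Y \<in> F \<Longrightarrow> X \<noteq> Y \<Longrightarrow> card (A X \<inter> A Y) \<le> 1" using P3 by blast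
    show ?thesis by (rule insert.IH[OF Q1 Q2 Q3])
  qed
  have "card (A D \<inter> ?U) = card (\<Union>D'\<in>F. A D \<inter> A D')" by (simp only: Int_UN_distrib)
  also have "\<dots> \<le> (\<Sum>D'\<in>F. card (A D \<inter> A D'))" by (rule card_UN_le) (rule insert.hyps(1))
  also have "\<dots> \<le> (\<Sum>D'\<in>F. 1)"
  proof (rule sum_mono)
    fix X assume "X \<in> F"
    then show "card (A D \<inter> A X) \<le> 1" using P3 insert.hyps(2) by blast
  qed
  finally have I: "card (A D \<inter> ?U) \<le> card F" by simp
  have "card (A D) + card ?U = card (A D \<union> ?U) + card (A D \<inter> ?U)"
    by (rule card_Un_Int[OF finD finU])
  hence E: "real (card (A D \<union> ?U)) = real (card (A D)) + real (card ?U) - real (card (A D \<inter> ?U))"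
    by linarith
  have gD: "g \<le> real (card (A D))" using P2 by blast
  have cF: "card (insert D F) = card F + 1" using insert.hyps by simp
  have UU: "(\<Union>D\<in>insert D F. A D) = A D \<union> ?U" by simp
  have "real (card (insert D F)) * g - real (card (insert D F)) * (real (card (insert D F)) - 1) / 2
     = g + (real (card F) * g - real (card F) * (real (card F) - 1) / 2) - real (card F)"
    unfolding cF by (simp add: field_simps)
  moreover have "real (card (A D \<inter> ?U)) \<le> real (card F)" using I by simp
  ultimately show ?case unfolding UU using E IH gD by linarith
qed




lemma edges_in_le:
  assumes "simple_graph G" "C \<subseteq> verts G"
    "\<And>u. u \<in> verts G \<Longrightarrow> card {w. {w, u} \<in> edges G} \<le> \<Delta>"
  shows "card {e \<in> edges G. e \<subseteq> C} \<le> card C * \<Delta>"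
proof -
  have finV: "finite (verts G)" using assms(1) simple_graph_def by blast
  have finC: "finite C" using assms(2) finV finite_subset by blast
  have finN: "finite {w. {w, u} \<in> edges G}" for u
  proof -
    have "{w. {w, u} \<in> edges G} \<subseteq> verts G"
      using assms(1) unfolding simple_graph_def by (smt (verit) doubleton_eq_iff insertI1 mem_Collect_eq subsetI)
    then show ?thesis using finV finite_subset by blast
  qed
  have "{e \<in> edges G. e \<subseteq> C} \<subseteq> (\<lambda>(u,w). {u,w}) ` (SIGMA u:C. {w. {w, u} \<in> edges G})"
  proof
    fix e assume e: "e \<in> {e \<in> edges G. e \<subseteq> C}"
    then obtain u v where "e = {u,v}" using assms(1) unfolding simple_graph_def by blast
    then have uv: "e = {u,v}" "u \<in> C" "v \<in> C" "{v,u} \<in> edges G" using e by (auto simp: insert_commute)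
    have "(u,v) \<in> (SIGMA u:C. {w. {w, u} \<in> edges G})" using uv by simp
    then show "e \<in> (\<lambda>(u,w). {u,w}) ` (SIGMA u:C. {w. {w, u} \<in> edges G})"
      using uv(1) by (metis (no_types, lifting) case_prod_conv image_eqI)
  qed
  moreover have finS: "finite (SIGMA u:C. {w. {w, u} \<in> edges G})"
    using finC finN by (intro finite_SigmaI) auto
  ultimately have "card {e \<in> edges G. e \<subseteq> C} \<le> card ((\<lambda>(u,w). {u,w}) ` (SIGMA u:C. {w. {w, u} \<in> edges G}))"
    by (intro card_mono finite_imageI)
  also have "\<dots> \<le> card (SIGMA u:C. {w. {w, u} \<in> edges G})"
    by (rule card_image_le[OF finS])
  also have "\<dots> = (\<Sum>u\<in>C. card {w. {w, u} \<in> edges G})"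
    using finC finN by (simp add: card_SigmaI)
  also have "\<dots> \<le> (\<Sum>u\<in>C. \<Delta>)" by (rule sum_mono) (use assms in auto)
  finally show ?thesis by simp
qed

lemma per_cluster:
  assumes sg: "simple_graph G"
    and sz: "\<And>D. D \<in> maximal_cliques G \<Longrightarrow> card D = s"
    and pw: "\<And>D D'. D \<in> maximal_cliques G \<Longrightarrow> D' \<in> maximal_cliques G \<Longrightarrow> D \<noteq> D' \<Longrightarrow> card (D \<inter> D') \<le> 1"
    and dg: "\<And>u. u \<in> verts G \<Longrightarrow> card {w. {w, u} \<in> edges G} \<le> \<Delta>"
    and gs: "\<gamma> * s > 1" and big: "(\<gamma> * s - 1) * (\<gamma> * s) / 2 > 1 + 2 * \<Delta> / \<delta>"
    and dp: "\<delta> > 0" and gp: "\<gamma> > 0"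
    and CV: "C \<subseteq> verts G" and dens: "induced_density G C \<ge> \<delta>"
  shows "real (card {D \<in> maximal_cliques G. real (card (C \<inter> D)) \<ge> \<gamma> * real (card D)}) \<le> 2 * card C / (\<gamma> * s)"
proof -
  let ?M = "maximal_cliques G"
  let ?F = "{D \<in> ?M. real (card (C \<inter> D)) \<ge> \<gamma> * real (card D)}"
  have finV: "finite (verts G)" using sg simple_graph_def by blast
  have finC: "finite C" using CV finV finite_subset by blast
  have MV: "?M \<subseteq> Pow (verts G)"
    by (auto simp: maximal_cliques_def maximal_clique_def is_clique_def)
  have finM: "finite ?M" using MV finV by (meson finite_Pow_iff finite_subset)
  have finF: "finite ?F" using finM by simp
  have Fg: "\<gamma> * s \<le> real (card (C \<inter> D))" if "D \<in> ?F" for D using that sz by auto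
  show ?thesis
  proof (cases "card C \<le> 1")
    case True
    have "?F = {}"
    proof (rule ccontr)
      assume "?F \<noteq> {}"
      then obtain D where D: "D \<in> ?F" by blast
      have "card (C \<inter> D) \<le> card C" using finC by (simp add: card_mono)
      then show False using Fg[OF D] True gs by linarith
    qed
    then have c0: "card ?F = 0" by (simp only: card.empty)
    have h0: "0 \<le> 2 * real (card C) / (\<gamma> * s)" using gp gs by simp
    show ?thesis using h0 by (simp only: c0 of_nat_0)
  next
    case False
    define c where "c = card C"
    have c2: "c \<ge> 2" using False c_def by simp
    have eC: "card {e \<in> edges G. e \<subseteq> C} \<le> c * \<Delta>" using edges_in_le[OF sg CV dg] c_def by blast
    have ch: "real (c choose 2) = real c * (real c - 1) / 2"
      using c2 by (simp add: choose_two field_char_0_class.of_nat_div mod_eq_0_iff_dvd of_nat_diff)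
    have chp: "real (c choose 2) > 0" using ch c2 by simp
    have "\<delta> \<le> real (card {e \<in> edges G. e \<subseteq> C}) / real (c choose 2)"
      using dens False c_def unfolding induced_density_def by simp
    hence "\<delta> * real (c choose 2) \<le> real (card {e \<in> edges G. e \<subseteq> C})"
      using chp by (simp add: pos_le_divide_eq)
    also have "\<dots> \<le> real c * \<Delta>" using eC by (simp only: of_nat_mult[symmetric] of_nat_le_iff)
    finally have "\<delta> * (real c * (real c - 1) / 2) \<le> real c * \<Delta>" using ch by simp
    hence "real c * (\<delta> * (real c - 1)) \<le> real c * (2 * \<Delta>)" by (simp add: field_simps)
    moreover have "real c > 0" using c2 by simp
    ultimately have "\<delta> * (real c - 1) \<le> 2 * \<Delta>" by (simp only: mult_le_cancel_left_pos)
    hence cb: "real c \<le> 1 + 2 * \<Delta> / \<delta>" using dp by (simp add: field_simps)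
    have bon: "real (card F') * (\<gamma> * s) - real (card F') * (real (card F') - 1) / 2 \<le> real c"
      if "F' \<subseteq> ?F" for F'
    proof -
      have fin': "finite F'" using that finF finite_subset by blast
      have "real (card F') * (\<gamma> * s) - real (card F') * (real (card F') - 1) / 2
          \<le> real (card (\<Union>D\<in>F'. C \<inter> D))"
      proof (rule bonferroni[OF fin'])
        show "finite (C \<inter> D)" for D using finC by simp
        show "\<gamma> * s \<le> real (card (C \<inter> D))" if "D \<in> F'" for D using Fg that \<open>F' \<subseteq> ?F\<close> by blast
        show "card ((C \<inter> D) \<inter> (C \<inter> D')) \<le> 1" if "D \<in> F'" "D' \<in> F'" "D \<noteq> D'" for D D'
        proof -
          have "D' \<in> ?M" using that(2) \<open>F' \<subseteq> ?F\<close> by blast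
          hence "D' \<subseteq> verts G" using MV by blast
          hence "finite D'" using finV finite_subset by blast
          hence "finite (D \<inter> D')" by simp
          hence "card ((C \<inter> D) \<inter> (C \<inter> D')) \<le> card (D \<inter> D')"
            by (rule card_mono) blast
          also have "\<dots> \<le> 1" using pw that \<open>F' \<subseteq> ?F\<close> by blast
          finally show ?thesis .
        qed
      qed
      also have "\<dots> \<le> real c" unfolding c_def by (simp add: card_mono finC)
      finally show ?thesis .
    qed
    have Xle: "real (card ?F) \<le> \<gamma> * s"
    proof (rule ccontr)
      assume nX: "\<not> ?thesis"
      define m where "m = nat \<lfloor>\<gamma> * s\<rfloor>"
      have m1: "real m \<le> \<gamma> * s" "real m > \<gamma> * s - 1" using gs unfolding m_def by linarith+
      have "m \<le> card ?F" using m1 nX by linarith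
      then obtain F' where F': "F' \<subseteq> ?F" "card F' = m" by (meson obtain_subset_with_card_n)
      have b: "real m * (\<gamma> * s) - real m * (real m - 1) / 2 \<le> real c" using bon[OF F'(1)] F'(2) by simp
      have "real m * (real m - 1) \<le> real m * (\<gamma> * s)" using m1 by (simp add: mult_left_mono)
      hence "real m * (\<gamma> * s) / 2 \<le> real c" using b by linarith
      moreover have "(\<gamma> * s - 1) * (\<gamma> * s) \<le> real m * (\<gamma> * s)"
        by (rule mult_right_mono) (use m1 gs in linarith)+
      ultimately show False using big cb by linarith
    qed
    have b: "real (card ?F) * (\<gamma> * s) - real (card ?F) * (real (card ?F) - 1) / 2 \<le> real c"
      using bon[OF subset_refl] .
    have "real (card ?F) * (real (card ?F) - 1) \<le> real (card ?F) * (\<gamma> * s)"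
      by (rule mult_left_mono) (use Xle in linarith, simp)
    hence "real (card ?F) * (\<gamma> * s) \<le> 2 * real c" using b by linarith
    moreover have gsp: "\<gamma> * s > 0" using gs by linarith
    ultimately show ?thesis unfolding c_def by (subst pos_le_divide_eq[OF gsp]) simp
  qed
qed




lemma global_bound:
  assumes sg: "simple_graph G" and ne: "verts G \<noteq> {}"
    and sz: "\<And>D. D \<in> maximal_cliques G \<Longrightarrow> card D = s"
    and pw: "\<And>D D'. D \<in> maximal_cliques G \<Longrightarrow> D' \<in> maximal_cliques G \<Longrightarrow> D \<noteq> D' \<Longrightarrow> card (D \<inter> D') \<le> 1"
    and dg: "\<And>u. u \<in> verts G \<Longrightarrow> card {w. {w, u} \<in> edges G} \<le> \<Delta>"
    and inr: "\<And>u. u \<in> verts G \<Longrightarrow> card {D \<in> maximal_cliques G. u \<in> D} \<ge> r" and r1: "r \<ge> 1"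
    and gs: "\<gamma> * s > 1" and big: "(\<gamma> * s - 1) * (\<gamma> * s) / 2 > 1 + 2 * \<Delta> / \<delta>"
    and dp: "\<delta> > 0" and gp: "\<gamma> > 0"
    and cl: "clustering G \<C>" and dens: "\<forall>C\<in>\<C>. induced_density G C \<ge> \<delta>"
  shows "covered_fraction G \<C> \<gamma> \<le> 2 / (\<gamma> * r)"
proof -
  let ?M = "maximal_cliques G"
  let ?V = "verts G"
  let ?F = "\<lambda>C. {D \<in> ?M. real (card (C \<inter> D)) \<ge> \<gamma> * real (card D)}"
  let ?Cov = "{D \<in> ?M. \<exists>C\<in>\<C>. real (card (C \<inter> D)) \<ge> \<gamma> * real (card D)}"
  have finV: "finite ?V" using sg simple_graph_def by blast
  have MV: "?M \<subseteq> Pow ?V"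
    by (auto simp: maximal_cliques_def maximal_clique_def is_clique_def)
  have finM: "finite ?M" using MV finV by (meson finite_Pow_iff finite_subset)
  have CV: "\<And>C. C \<in> \<C> \<Longrightarrow> C \<subseteq> ?V" using cl clustering_def by blast
  have finCl: "finite \<C>" using CV finV by (meson PowI finite_Pow_iff finite_subset subsetI)
  have sp: "s > 0" using gs by (cases "s = 0") auto
  have sumV: "(\<Sum>C\<in>\<C>. card C) = card ?V"
  proof -
    have disj: "pairwise disjnt \<C>"
      unfolding pairwise_def disjnt_def
    proof (intro ballI impI)
      fix C1 C2 assume C12: "C1 \<in> \<C>" "C2 \<in> \<C>" "C1 \<noteq> C2"
      show "C1 \<inter> C2 = {}"
      proof (rule ccontr)
        assume "C1 \<inter> C2 \<noteq> {}"
        then obtain v where v: "v \<in> C1" "v \<in> C2" by blast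
        have "v \<in> ?V" using CV[OF C12(1)] v(1) by blast
        then have "\<exists>!C. C \<in> \<C> \<and> v \<in> C" using cl unfolding clustering_def by blast
        then show False using C12 v by blast
      qed
    qed
    have U: "\<Union>\<C> = ?V" using cl unfolding clustering_def by blast
    have "card (\<Union>\<C>) = sum card \<C>"
      by (rule card_Union_disjoint[OF disj]) (use CV finV finite_subset in blast)
    then show ?thesis using U by simp
  qed
  have CovU: "?Cov = (\<Union>C\<in>\<C>. ?F C)" by blast
  have "card ?Cov \<le> (\<Sum>C\<in>\<C>. card (?F C))" unfolding CovU by (rule card_UN_le[OF finCl])
  hence "real (card ?Cov) \<le> real (\<Sum>C\<in>\<C>. card (?F C))" by (simp only: of_nat_le_iff)
  also have "\<dots> = (\<Sum>C\<in>\<C>. real (card (?F C)))" by (rule of_nat_sum)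
  also have "\<dots> \<le> (\<Sum>C\<in>\<C>. 2 * real (card C) / (\<gamma> * s))"
  proof (rule sum_mono)
    fix C assume C: "C \<in> \<C>"
    show "real (card (?F C)) \<le> 2 * real (card C) / (\<gamma> * s)"
    proof -
      have dC: "induced_density G C \<ge> \<delta>" using dens C by blast
      show ?thesis using per_cluster[OF sg sz pw dg gs big dp gp CV[OF C] dC] by simp
    qed
  qed
  also have "\<dots> = (\<Sum>C\<in>\<C>. 2 / (\<gamma> * s) * real (card C))"
    by (rule sum.cong) auto
  also have "\<dots> = 2 / (\<gamma> * s) * (\<Sum>C\<in>\<C>. real (card C))"
    by (rule sum_distrib_left[symmetric])
  also have "\<dots> = 2 / (\<gamma> * s) * real (card ?V)"
  proof -
    have "(\<Sum>C\<in>\<C>. real (card C)) = real (\<Sum>C\<in>\<C>. card C)" by (rule of_nat_sum[symmetric])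
    then show ?thesis using sumV by simp
  qed
  finally have cov0: "real (card ?Cov) \<le> 2 / (\<gamma> * s) * real (card ?V)" by simp
  have gsp: "\<gamma> * s > 0" using gs by linarith
  have "real (card ?Cov) \<le> 2 * real (card ?V) / (\<gamma> * s)" using cov0 by simp
  hence cov: "real (card ?Cov) * (\<gamma> * s) \<le> 2 * real (card ?V)"
    using gsp by (simp add: pos_le_divide_eq)
  have cnt: "(\<Sum>D\<in>?M. card D) = (\<Sum>v\<in>?V. card {D \<in> ?M. v \<in> D})"
  proof -
    have "(\<Sum>D\<in>?M. card D) = (\<Sum>D\<in>?M. \<Sum>v\<in>?V. if v \<in> D then 1 else 0)"
    proof (rule sum.cong[OF refl])
      fix D assume "D \<in> ?M"
      hence "D \<subseteq> ?V" using MV by blast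
      hence "?V \<inter> D = D" by blast
      thus "card D = (\<Sum>v\<in>?V. if v \<in> D then 1 else 0)"
        using sum.inter_restrict[OF finV, of "\<lambda>_. 1::nat" D] by simp
    qed
    also have "\<dots> = (\<Sum>v\<in>?V. \<Sum>D\<in>?M. if v \<in> D then 1 else 0)" by (rule sum.swap)
    also have "\<dots> = (\<Sum>v\<in>?V. card {D \<in> ?M. v \<in> D})"
    proof (rule sum.cong[OF refl])
      fix v
      have "?M \<inter> {D. v \<in> D} = {D \<in> ?M. v \<in> D}" by blast
      thus "(\<Sum>D\<in>?M. if v \<in> D then 1 else 0) = card {D \<in> ?M. v \<in> D}"
        using sum.inter_restrict[OF finM, of "\<lambda>_. 1::nat" "{D. v \<in> D}"] by simp
    qed
    finally show ?thesis .
  qed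
  have "card ?M * s = (\<Sum>D\<in>?M. card D)" using sz by simp
  also have "\<dots> \<ge> (\<Sum>v\<in>?V. r)" unfolding cnt by (rule sum_mono) (use inr in auto)
  finally have Ms: "card ?V * r \<le> card ?M * s" by simp
  have nV: "card ?V \<ge> 1" using ne finV by (simp add: Suc_leI card_gt_0_iff)
  have Mpos: "card ?M > 0" using Ms nV r1 by (cases "card ?M = 0") auto
  have Msr: "real (card ?V) * r \<le> real (card ?M) * s" using Ms by (simp only: of_nat_mult[symmetric] of_nat_le_iff)
  have "(real (card ?Cov) * (\<gamma> * r)) * s = (real (card ?Cov) * (\<gamma> * s)) * r" by (simp add: ac_simps)
  also have "\<dots> \<le> (2 * real (card ?V)) * r"
    by (rule mult_right_mono[OF cov]) simp
  also have "\<dots> = 2 * (real (card ?V) * r)" by simp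
  also have "\<dots> \<le> 2 * (real (card ?M) * s)" using Msr by simp
  also have "\<dots> = (2 * real (card ?M)) * s" by simp
  finally have "(real (card ?Cov) * (\<gamma> * r)) * s \<le> (2 * real (card ?M)) * s" .
  hence X: "real (card ?Cov) * (\<gamma> * r) \<le> 2 * real (card ?M)" using sp by simp
  have grp: "\<gamma> * r > 0" using gp r1 by simp
  have Mp: "real (card ?M) > 0" using Mpos by simp
  have "real (card ?Cov) \<le> 2 * real (card ?M) / (\<gamma> * r)" using X grp by (simp add: pos_le_divide_eq)
  hence "real (card ?Cov) \<le> 2 / (\<gamma> * r) * real (card ?M)" by simp
  hence "real (card ?Cov) / real (card ?M) \<le> 2 / (\<gamma> * r)" using Mp by (simp add: pos_divide_le_eq)
  then show ?thesis unfolding covered_fraction_def by simp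
qed




definition HV :: "nat \<Rightarrow> nat \<Rightarrow> nat list set" where
  "HV k t = {xs. length xs = k \<and> set xs \<subseteq> {..<t}}"
definition hadj :: "nat list \<Rightarrow> nat list \<Rightarrow> bool" where
  "hadj x y \<longleftrightarrow> (\<exists>i<length x. y ! i \<noteq> x ! i \<and> y = x[i := y ! i])"
definition hline :: "nat \<Rightarrow> nat list \<Rightarrow> nat \<Rightarrow> nat list set" where
  "hline t x i = (\<lambda>a. x[i := a]) ` {..<t}"
definition HG :: "nat \<Rightarrow> nat \<Rightarrow> graph" where
  "HG k t = (to_nat ` HV k t, {{to_nat x, to_nat y} | x y. x \<in> HV k t \<and> y \<in> HV k t \<and> hadj x y})"

lemma verts_HG: "verts (HG k t) = to_nat ` HV k t" by (simp add: verts_def HG_def)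
lemma edges_HG: "edges (HG k t) = {{to_nat x, to_nat y} | x y. x \<in> HV k t \<and> y \<in> HV k t \<and> hadj x y}"
  by (simp add: edges_def HG_def)

lemma finite_HV: "finite (HV k t)"
proof -
  have "HV k t = {xs. set xs \<subseteq> {..<t} \<and> length xs = k}" unfolding HV_def by blast
  then show ?thesis using finite_lists_length_eq[of "{..<t}" k] by simp
qed

lemma hadj_len: "hadj x y \<Longrightarrow> length y = length x"
  unfolding hadj_def by (metis length_list_update)

lemma hadj_neq: "hadj x y \<Longrightarrow> x \<noteq> y"
  unfolding hadj_def by blast

lemma hadj_sym: "hadj x y \<Longrightarrow> hadj y x"
proof -
  assume "hadj x y"
  then obtain i where i: "i < length x" "y ! i \<noteq> x ! i" "y = x[i := y ! i]" unfolding hadj_def by blast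
  have "x = y[i := x ! i]" using i by (metis list_update_id list_update_overwrite)
  moreover have "i < length y" using i by (metis length_list_update)
  ultimately show "hadj y x" unfolding hadj_def using i(2) by metis
qed

lemma to_nat_eq: "to_nat (x::nat list) = to_nat y \<longleftrightarrow> x = y"
  using inj_to_nat by (metis injD)

lemma edge_HG: assumes "x \<in> HV k t" "y \<in> HV k t"
  shows "{to_nat x, to_nat y} \<in> edges (HG k t) \<longleftrightarrow> hadj x y"
proof
  assume "{to_nat x, to_nat y} \<in> edges (HG k t)"
  then obtain a b where ab: "{to_nat x, to_nat y} = {to_nat a, to_nat b}" "hadj a b"
    unfolding edges_HG by blast
  then have "(x = a \<and> y = b) \<or> (x = b \<and> y = a)" by (simp add: doubleton_eq_iff to_nat_eq)
  then show "hadj x y" using ab(2) hadj_sym by blast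
next
  assume "hadj x y"
  then show "{to_nat x, to_nat y} \<in> edges (HG k t)" unfolding edges_HG using assms by blast
qed

lemma line_sub_HV: assumes "x \<in> HV k t" shows "hline t x i \<subseteq> HV k t"
proof
  fix z assume "z \<in> hline t x i"
  then obtain a where a: "a < t" "z = x[i := a]" unfolding hline_def by blast
  have "set z \<subseteq> insert a (set x)" using a(2) by (simp add: set_update_subset_insert)
  then show "z \<in> HV k t" using assms a unfolding HV_def by auto
qed

lemma line_adj: assumes "u \<in> hline t x i" "v \<in> hline t x i" "u \<noteq> v" "i < length x"
  shows "hadj u v"
proof -
  obtain a b where ab: "u = x[i := a]" "v = x[i := b]" using assms unfolding hline_def by blast
  have "a \<noteq> b" using ab assms(3) by blast
  have "v ! i = b" "u ! i = a" using ab assms(4) by simp_all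
  moreover have "v = u[i := b]" using ab by simp
  ultimately show ?thesis unfolding hadj_def using assms(4) ab \<open>a \<noteq> b\<close> by auto
qed

lemma card_line: assumes "i < length x" shows "card (hline t x i) = t"
proof -
  have "inj_on (\<lambda>a. x[i := a]) {..<t}"
    by (rule inj_onI) (metis assms nth_list_update_eq)
  then show ?thesis unfolding hline_def by (simp add: card_image)
qed

lemma key:
  assumes i: "i < length x" "y ! i \<noteq> x ! i" "y = x[i := y ! i]"
    and xz: "hadj x z" and yz: "hadj y z"
  shows "z = x[i := z ! i]"
proof -
  obtain j where j: "j < length x" "z ! j \<noteq> x ! j" "z = x[j := z ! j]" using xz unfolding hadj_def by blast
  obtain l where l: "l < length y" "z ! l \<noteq> y ! l" "z = y[l := z ! l]" using yz unfolding hadj_def by blast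
  have "j = i"
  proof (rule ccontr)
    assume ji: "j \<noteq> i"
    have zi: "z ! i = x ! i" using j ji i(1) by (metis nth_list_update_neq)
    have "l = i"
    proof (rule ccontr)
      assume "l \<noteq> i"
      then have "z ! i = y ! i" using l by (metis nth_list_update_neq)
      then show False using zi i(2) by simp
    qed
    have yj: "y ! j = x ! j" using i ji by (metis nth_list_update_neq)
    have "l = j"
    proof (rule ccontr)
      assume "l \<noteq> j"
      then have "z ! j = y ! j" using l by (metis nth_list_update_neq)
      then show False using yj j(2) by simp
    qed
    then show False using \<open>l = i\<close> ji by simp
  qed
  then show ?thesis using j by simp
qed

lemma HV_len: "x \<in> HV k t \<Longrightarrow> length x = k" unfolding HV_def by simp
lemma HV_nth: "x \<in> HV k t \<Longrightarrow> i < k \<Longrightarrow> x ! i < t"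
  using nth_mem[of i x] unfolding HV_def by fastforce

lemma self_in_line: "x \<in> HV k t \<Longrightarrow> i < k \<Longrightarrow> x \<in> hline t x i"
  unfolding hline_def using HV_nth[of x k t i] by (intro image_eqI[where x="x ! i"]) auto

lemma clique_in_line:
  assumes cl: "is_clique (HG k t) D" and x: "x \<in> HV k t" and y: "y \<in> HV k t"
    and xD: "to_nat x \<in> D" and yD: "to_nat y \<in> D"
    and i: "i < length x" "y ! i \<noteq> x ! i" "y = x[i := y ! i]"
  shows "D \<subseteq> to_nat ` hline t x i"
proof
  fix w assume wD: "w \<in> D"
  have "w \<in> verts (HG k t)" using cl wD unfolding is_clique_def by blast
  then obtain z where z: "z \<in> HV k t" "w = to_nat z" unfolding verts_HG by blast
  have ik: "i < k" using i(1) x HV_len by simp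
  have "z = x[i := z ! i]"
  proof (cases "z = x \<or> z = y")
    case True
    show ?thesis
    proof (cases "z = x")
      case True
      then show ?thesis by simp
    next
      case False
      then have "z = y" using \<open>z = x \<or> z = y\<close> by blast
      show ?thesis using i(3) unfolding \<open>z = y\<close> .
    qed
  next
    case False
    have "to_nat x \<noteq> to_nat z" "to_nat y \<noteq> to_nat z" using False by (simp_all add: to_nat_eq) blast+
    then have "{to_nat x, to_nat z} \<in> edges (HG k t)" "{to_nat y, to_nat z} \<in> edges (HG k t)"
      using cl xD yD wD z(2) unfolding is_clique_def by blast+
    then have "hadj x z" "hadj y z" using edge_HG x y z(1) by blast+
    then show ?thesis using key[OF i] by blast
  qed
  moreover have "z ! i < t" using HV_nth[OF z(1) ik] .
  ultimately have "z \<in> hline t x i" unfolding hline_def by blast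
  then show "w \<in> to_nat ` hline t x i" using z(2) by blast
qed

lemma line_clique:
  assumes x: "x \<in> HV k t" and ik: "i < k"
  shows "is_clique (HG k t) (to_nat ` hline t x i)"
  unfolding is_clique_def
proof (intro conjI ballI impI)
  show "to_nat ` hline t x i \<subseteq> verts (HG k t)" unfolding verts_HG using line_sub_HV[OF x] by blast
next
  fix u v assume u: "u \<in> to_nat ` hline t x i" and v: "v \<in> to_nat ` hline t x i" and uv: "u \<noteq> v"
  obtain a b where ab: "a \<in> hline t x i" "b \<in> hline t x i" "u = to_nat a" "v = to_nat b" using u v by blast
  have "a \<noteq> b" using ab uv by blast
  have il: "i < length x" using x ik HV_len by simp
  have "hadj a b" by (rule line_adj[OF ab(1,2) \<open>a \<noteq> b\<close> il])
  moreover have "a \<in> HV k t" "b \<in> HV k t" using ab line_sub_HV[OF x] by blast+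
  ultimately show "{u, v} \<in> edges (HG k t)" using edge_HG ab by blast
qed

lemma other_val: assumes "t \<ge> 2" "x \<in> HV k t" "i < k"
  shows "\<exists>a<t. a \<noteq> x ! i"
proof (cases "x ! i = 0")
  case True
  then show ?thesis using assms(1) by (intro exI[of _ 1]) auto
next
  case False
  then show ?thesis using assms(1) by (intro exI[of _ 0]) auto
qed

lemma max_clique_line:
  assumes t2: "t \<ge> 2" and x: "x \<in> HV k t" and ik: "i < k"
  shows "maximal_clique (HG k t) (to_nat ` hline t x i)"
  unfolding maximal_clique_def
proof (intro conjI allI impI)
  show "is_clique (HG k t) (to_nat ` hline t x i)" by (rule line_clique[OF x ik])
next
  fix D' assume D': "is_clique (HG k t) D' \<and> to_nat ` hline t x i \<subseteq> D'"
  obtain a where a: "a < t" "a \<noteq> x ! i" using other_val[OF t2 x ik] by blast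
  let ?y = "x[i := a]"
  have il: "i < length x" using x ik HV_len by simp
  have yl: "?y \<in> hline t x i" using a unfolding hline_def by blast
  have xl: "x \<in> hline t x i" by (rule self_in_line[OF x ik])
  have y: "?y \<in> HV k t" using yl line_sub_HV[OF x] by blast
  have "D' \<subseteq> to_nat ` hline t x i"
  proof (rule clique_in_line[OF _ x y])
    show "is_clique (HG k t) D'" using D' by blast
    show "to_nat x \<in> D'" "to_nat ?y \<in> D'" using D' xl yl by blast+
    show "i < length x" by (rule il)
    show "?y ! i \<noteq> x ! i" "?y = x[i := ?y ! i]" using il a by simp_all
  qed
  then show "D' = to_nat ` hline t x i" using D' by blast
qed

lemma line_same: assumes "i < length x" shows "hline t (x[i := a]) i = hline t x i"
  unfolding hline_def by simp

lemma maxcl_eq: "maximal_clique G D \<Longrightarrow> is_clique G D' \<Longrightarrow> D \<subseteq> D' \<Longrightarrow> D' = D"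
  unfolding maximal_clique_def by blast

lemma max_clique_is_line:
  assumes t2: "t \<ge> 2" and k1: "k \<ge> 1" and mc: "maximal_clique (HG k t) D"
  shows "\<exists>x\<in>HV k t. \<exists>i<k. D = to_nat ` hline t x i"
proof -
  have cl: "is_clique (HG k t) D" using mc maximal_clique_def by blast
  have z0: "replicate k 0 \<in> HV k t" using t2 unfolding HV_def by auto
  have "D \<noteq> {}"
  proof
    assume "D = {}"
    have "is_clique (HG k t) {to_nat (replicate k (0::nat))}"
      unfolding is_clique_def verts_HG using z0 by (simp add: image_eqI)
    then have "{to_nat (replicate k (0::nat))} = D" using mc \<open>D = {}\<close> unfolding maximal_clique_def by blast
    then show False using \<open>D = {}\<close> by blast
  qed
  then obtain u where uD: "u \<in> D" by blast
  have "u \<in> verts (HG k t)" using cl uD unfolding is_clique_def by blast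
  then obtain x where x: "x \<in> HV k t" "u = to_nat x" unfolding verts_HG by blast
  show ?thesis
  proof (cases "D \<subseteq> {u}")
    case True
    have k0: "0 < k" using k1 by simp
    have "x \<in> hline t x 0" by (rule self_in_line[OF x(1) k0])
    then have "D \<subseteq> to_nat ` hline t x 0" using True x(2) by blast
    then have eq: "to_nat ` hline t x 0 = D" by (rule maxcl_eq[OF mc line_clique[OF x(1) k0]])
    show ?thesis by (rule bexI[OF _ x(1)], rule exI[of _ 0], rule conjI) (use k0 eq in simp_all)
  next
    case False
    then obtain w where w: "w \<in> D" "w \<noteq> u" by blast
    have cD: "D \<subseteq> verts (HG k t)" using cl by (simp add: is_clique_def)
    have "w \<in> verts (HG k t)" using cD w(1) by (rule subsetD)
    then obtain y where y: "y \<in> HV k t" "w = to_nat y" unfolding verts_HG by blast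
    have call: "\<forall>a\<in>D. \<forall>b\<in>D. a \<noteq> b \<longrightarrow> {a, b} \<in> edges (HG k t)" using cl by (simp add: is_clique_def)
    have "u \<noteq> w" using w(2) by (rule not_sym)
    have "{u, w} \<in> edges (HG k t)" by (rule call[rule_format, OF uD w(1) \<open>u \<noteq> w\<close>])
    then have "{to_nat x, to_nat y} \<in> edges (HG k t)" using x(2) y(2) by simp
    then have "hadj x y" by (rule edge_HG[OF x(1) y(1), THEN iffD1])
    then obtain i where i: "i < length x" "y ! i \<noteq> x ! i" "y = x[i := y ! i]" unfolding hadj_def by blast
    have ik: "i < k" using i(1) HV_len[OF x(1)] by simp
    have "D \<subseteq> to_nat ` hline t x i"
      by (rule clique_in_line[OF cl x(1) y(1) _ _ i]) (use x(2) y(2) uD w(1) in blast)+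
    then have eq: "to_nat ` hline t x i = D" by (rule maxcl_eq[OF mc line_clique[OF x(1) ik]])
    show ?thesis by (rule bexI[OF _ x(1)], rule exI[of _ i], rule conjI) (use ik eq in simp_all)
  qed
qed

lemma HG_simple: "simple_graph (HG k t)"
  unfolding simple_graph_def
proof (intro conjI ballI)
  show "finite (verts (HG k t))" unfolding verts_HG using finite_HV by simp
next
  fix e assume "e \<in> edges (HG k t)"
  then obtain x y where xy: "e = {to_nat x, to_nat y}" "x \<in> HV k t" "y \<in> HV k t" "hadj x y"
    unfolding edges_HG by blast
  have "x \<noteq> y" using xy(4) by (rule hadj_neq)
  then have "to_nat x \<noteq> to_nat y" by (simp add: to_nat_eq)
  moreover have "to_nat x \<in> verts (HG k t)" "to_nat y \<in> verts (HG k t)" unfolding verts_HG using xy by simp_all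
  ultimately show "\<exists>u v. u \<noteq> v \<and> e = {u, v} \<and> u \<in> verts (HG k t) \<and> v \<in> verts (HG k t)"
    using xy(1) by blast
qed

lemma HG_ne: "t \<ge> 1 \<Longrightarrow> verts (HG k t) \<noteq> {}"
proof -
  assume "t \<ge> 1"
  then have "replicate k (0::nat) \<in> HV k t" unfolding HV_def by auto
  then show ?thesis unfolding verts_HG by blast
qed

lemma HG_mc_card:
  assumes t2: "t \<ge> 2" and k1: "k \<ge> 1" and D: "D \<in> maximal_cliques (HG k t)"
  shows "card D = t"
proof -
  obtain x i where xi: "x \<in> HV k t" "i < k" "D = to_nat ` hline t x i"
    using max_clique_is_line[OF t2 k1] D unfolding maximal_cliques_def by blast
  have "inj_on to_nat (hline t x i)" using inj_to_nat by (rule inj_on_subset) simp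
  then have "card D = card (hline t x i)" using xi(3) by (simp add: card_image)
  also have "\<dots> = t" by (rule card_line) (use xi HV_len in simp)
  finally show ?thesis .
qed

lemma HG_mc_pw:
  assumes t2: "t \<ge> 2" and k1: "k \<ge> 1" and D1: "D1 \<in> maximal_cliques (HG k t)"
    and D2: "D2 \<in> maximal_cliques (HG k t)" and ne: "D1 \<noteq> D2"
  shows "card (D1 \<inter> D2) \<le> 1"
proof -
  have m1: "maximal_clique (HG k t) D1" and m2: "maximal_clique (HG k t) D2"
    using D1 D2 unfolding maximal_cliques_def by simp_all
  obtain x i where xi: "x \<in> HV k t" "i < k" "D1 = to_nat ` hline t x i"
    using max_clique_is_line[OF t2 k1 m1] by blast
  have il: "i < length x" using xi HV_len by simp
  have fin: "finite (D1 \<inter> D2)" using xi(3) unfolding hline_def by simp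
  have "\<forall>u\<in>D1 \<inter> D2. \<forall>v\<in>D1 \<inter> D2. u = v"
  proof (intro ballI, rule ccontr)
    fix u v assume u: "u \<in> D1 \<inter> D2" and v: "v \<in> D1 \<inter> D2" and uv: "u \<noteq> v"
    obtain a b where ab: "a < t" "b < t" "u = to_nat (x[i := a])" "v = to_nat (x[i := b])"
      using u v xi(3) unfolding hline_def by blast
    let ?x = "x[i := a]" and ?y = "x[i := b]"
    have "a \<noteq> b" using ab uv by blast
    have xl: "?x \<in> hline t x i" "?y \<in> hline t x i" using ab unfolding hline_def by blast+
    have xH: "?x \<in> HV k t" "?y \<in> HV k t" using xl line_sub_HV[OF xi(1)] by blast+
    have cl2: "is_clique (HG k t) D2" using m2 maximal_clique_def by blast
    have "D2 \<subseteq> to_nat ` hline t ?x i"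
    proof (rule clique_in_line[OF cl2 xH])
      show "to_nat ?x \<in> D2" "to_nat ?y \<in> D2" using u v ab by blast+
      show "i < length ?x" using il by simp
      show "?y ! i \<noteq> ?x ! i" using il \<open>a \<noteq> b\<close> by simp
      show "?y = ?x[i := ?y ! i]" using il by simp
    qed
    also have "hline t ?x i = hline t x i" by (rule line_same[OF il])
    finally have "D2 \<subseteq> D1" using xi(3) by simp
    then have "D1 = D2" by (rule maxcl_eq[OF m2 line_clique[OF xi(1) xi(2)], unfolded xi(3)[symmetric]])
    then show False using ne by simp
  qed
  then show ?thesis using card_le_Suc0_iff_eq[OF fin] by simp
qed

lemma HG_deg:
  assumes u: "u \<in> verts (HG k t)"
  shows "card {w. {w, u} \<in> edges (HG k t)} \<le> k * t"
proof -
  obtain x where x: "x \<in> HV k t" "u = to_nat x" using u unfolding verts_HG by blast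
  have "{w. {w, u} \<in> edges (HG k t)} \<subseteq> to_nat ` (\<Union>i<k. hline t x i)"
  proof
    fix w assume "w \<in> {w. {w, u} \<in> edges (HG k t)}"
    then have e: "{w, u} \<in> edges (HG k t)" by simp
    have "w \<in> verts (HG k t)"
    proof -
      obtain a b where ab: "{w, u} = {to_nat a, to_nat b}" "a \<in> HV k t" "b \<in> HV k t"
        using e unfolding edges_HG by blast
      then have "w = to_nat a \<or> w = to_nat b" by (simp add: doubleton_eq_iff) blast
      then show ?thesis unfolding verts_HG using ab by blast
    qed
    then obtain y where y: "y \<in> HV k t" "w = to_nat y" unfolding verts_HG by blast
    have "{to_nat y, to_nat x} \<in> edges (HG k t)" using e x(2) y(2) by simp
    then have "hadj y x" by (rule edge_HG[OF y(1) x(1), THEN iffD1])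
    then have "hadj x y" by (rule hadj_sym)
    then obtain i where i: "i < length x" "y ! i \<noteq> x ! i" "y = x[i := y ! i]" unfolding hadj_def by blast
    have ik: "i < k" using i(1) HV_len[OF x(1)] by simp
    have "y ! i < t" using HV_nth[OF y(1) ik] .
    then have "y \<in> hline t x i" unfolding hline_def using i(3) by blast
    then show "w \<in> to_nat ` (\<Union>i<k. hline t x i)" using ik y(2) by blast
  qed
  then have "card {w. {w, u} \<in> edges (HG k t)} \<le> card (to_nat ` (\<Union>i<k. hline t x i))"
    by (rule card_mono[rotated]) (simp add: hline_def)
  also have "\<dots> \<le> card (\<Union>i<k. hline t x i)" by (rule card_image_le) (simp add: hline_def)
  also have "\<dots> \<le> (\<Sum>i<k. card (hline t x i))" by (rule card_UN_le) simp
  also have "\<dots> \<le> (\<Sum>i<k. t)"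
  proof (rule sum_mono)
    fix i assume "i \<in> {..<k}"
    show "card (hline t x i) \<le> t" using card_image_le[of "{..<t}" "\<lambda>a. x[i := a]"] unfolding hline_def by simp
  qed
  finally show ?thesis by simp
qed

lemma HG_inr:
  assumes t2: "t \<ge> 2" and u: "u \<in> verts (HG k t)"
  shows "card {D \<in> maximal_cliques (HG k t). u \<in> D} \<ge> k"
proof -
  obtain x where x: "x \<in> HV k t" "u = to_nat x" using u unfolding verts_HG by blast
  let ?f = "\<lambda>i. to_nat ` hline t x i"
  have sub: "?f ` {..<k} \<subseteq> {D \<in> maximal_cliques (HG k t). u \<in> D}"
  proof
    fix D assume "D \<in> ?f ` {..<k}"
    then obtain i where i: "i < k" "D = ?f i" by blast
    have "maximal_clique (HG k t) D" using max_clique_line[OF t2 x(1) i(1)] i(2) by simp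
    moreover have "u \<in> D" using self_in_line[OF x(1) i(1)] x(2) i(2) by blast
    ultimately show "D \<in> {D \<in> maximal_cliques (HG k t). u \<in> D}" unfolding maximal_cliques_def by simp
  qed
  have inj: "inj_on ?f {..<k}"
  proof (rule inj_onI)
    fix i j assume i: "i \<in> {..<k}" and j: "j \<in> {..<k}" and eq: "?f i = ?f j"
    show "i = j"
    proof (rule ccontr)
      assume ij: "i \<noteq> j"
      obtain a where a: "a < t" "a \<noteq> x ! i" using other_val[OF t2 x(1)] i by auto
      have "x[i := a] \<in> hline t x i" using a unfolding hline_def by blast
      then have "to_nat (x[i := a]) \<in> ?f j" using eq by blast
      then have "x[i := a] \<in> hline t x j" by (simp add: inj_image_mem_iff[OF inj_to_nat])
      then obtain c where c: "x[i := a] = x[j := c]" unfolding hline_def by blast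
      have il: "i < length x" using i HV_len[OF x(1)] by simp
      have "x[i := a] ! i = a" using il by simp
      moreover have "x[j := c] ! i = x ! i" using ij by simp
      ultimately show False using c a(2) by simp
    qed
  qed
  have fin: "finite {D \<in> maximal_cliques (HG k t). u \<in> D}"
  proof -
    have "maximal_cliques (HG k t) \<subseteq> Pow (verts (HG k t))"
      by (auto simp: maximal_cliques_def maximal_clique_def is_clique_def)
    moreover have "finite (verts (HG k t))" unfolding verts_HG using finite_HV by simp
    ultimately have "finite (maximal_cliques (HG k t))" by (rule finite_subset[OF _ finite_Pow_iff[THEN iffD2]])
    then show ?thesis by simp
  qed
  have "k = card (?f ` {..<k})" using inj by (simp add: card_image)
  also have "\<dots> \<le> card {D \<in> maximal_cliques (HG k t). u \<in> D}" by (rule card_mono[OF fin sub])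
  finally show ?thesis .
qed




lemma arith_bound:
  fixes m \<gamma> \<delta> :: real
  assumes gp: "\<gamma> > 0" and dp: "\<delta> > 0" and m1: "m \<ge> 1" and mg: "m \<ge> 2 / \<gamma>"
    and mb: "m > 4 * (1 + 2 / \<delta>) / \<gamma>^2"
  shows "\<gamma> * m^2 > 1" and "(\<gamma> * m^2 - 1) * (\<gamma> * m^2) / 2 > 1 + 2 * (m * m^2) / \<delta>"
proof -
  have gm: "\<gamma> * m \<ge> 2" using mg gp by (simp add: field_simps)
  have x2: "\<gamma> * m^2 \<ge> 2 * m" using gm m1
    by (metis mult.assoc mult_right_mono power2_eq_square zero_le_one order_trans)
  then show x1: "\<gamma> * m^2 > 1" using m1 by linarith
  have xh: "\<gamma> * m^2 - 1 \<ge> \<gamma> * m^2 / 2" using x2 m1 by linarith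
  have xp: "\<gamma> * m^2 > 0" using x1 by linarith
  have "(\<gamma> * m^2 - 1) * (\<gamma> * m^2) / 2 \<ge> (\<gamma> * m^2 / 2) * (\<gamma> * m^2) / 2"
  proof -
    have "(\<gamma> * m^2 / 2) * (\<gamma> * m^2) \<le> (\<gamma> * m^2 - 1) * (\<gamma> * m^2)"
      by (rule mult_right_mono[OF xh]) (use xp in linarith)
    then show ?thesis by (rule divide_right_mono) simp
  qed
  also have "(\<gamma> * m^2 / 2) * (\<gamma> * m^2) / 2 = (\<gamma>^2 * m) * m^3 / 4"
    by (simp add: power2_eq_square power3_eq_cube)
  finally have A: "(\<gamma> * m^2 - 1) * (\<gamma> * m^2) / 2 \<ge> (\<gamma>^2 * m) * m^3 / 4" .
  have g2: "\<gamma>^2 > 0" using gp by simp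
  have "\<gamma>^2 * m > 4 * (1 + 2 / \<delta>)" using mb g2 by (simp add: field_simps)
  moreover have m3: "m^3 \<ge> 1" using m1 by (simp add: one_le_power)
  ultimately have "(\<gamma>^2 * m) * m^3 > 4 * (1 + 2 / \<delta>) * m^3"
    by (intro mult_strict_right_mono) (use m1 in auto)
  hence B: "(\<gamma>^2 * m) * m^3 / 4 > (1 + 2 / \<delta>) * m^3" by (simp add: algebra_simps)
  have "(1 + 2 / \<delta>) * m^3 = m^3 + 2 * m^3 / \<delta>" by (simp add: algebra_simps)
  also have "\<dots> \<ge> 1 + 2 * (m * m^2) / \<delta>" using m3 by (simp add: power3_eq_cube power2_eq_square)
  finally show "(\<gamma> * m^2 - 1) * (\<gamma> * m^2) / 2 > 1 + 2 * (m * m^2) / \<delta>" using A B by linarith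
qed

theorem theorem4p2:
  shows "\<exists>(N0::nat) (G::nat \<Rightarrow> graph).
     (\<forall>n\<ge>N0. simple_graph (G n) \<and> verts (G n) \<noteq> {}) \<and>
     (\<forall>\<delta>::real. \<forall>\<gamma>::real. \<forall>\<C>::nat \<Rightarrow> nat set set.
        \<delta> > 0 \<longrightarrow> \<gamma> > 0 \<longrightarrow>
        (\<forall>n\<ge>N0. clustering (G n) (\<C> n) \<and> (\<forall>C\<in>\<C> n. induced_density (G n) C \<ge> \<delta>)) \<longrightarrow>
        (\<lambda>n. covered_fraction (G n) (\<C> n) \<gamma>) \<longlonglongrightarrow> 0)"
proof (intro exI[of _ 2] exI[of _ "\<lambda>n. HG n (n^2)"] conjI allI impI)
  fix n :: nat assume n2: "n \<ge> 2"
  show "simple_graph (HG n (n^2))" by (rule HG_simple)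
  have "n^2 \<ge> 1" using n2 by simp
  then show "verts (HG n (n^2)) \<noteq> {}" by (rule HG_ne)
next
  fix \<delta> \<gamma> :: real and \<C> :: "nat \<Rightarrow> nat set set"
  assume dp: "\<delta> > 0" and gp: "\<gamma> > 0"
    and H: "\<forall>n\<ge>2. clustering (HG n (n^2)) (\<C> n) \<and> (\<forall>C\<in>\<C> n. induced_density (HG n (n^2)) C \<ge> \<delta>)"
  obtain N1 :: nat where N1: "real N1 > 4 * (1 + 2 / \<delta>) / \<gamma>^2" using reals_Archimedean2 by blast
  obtain N2 :: nat where N2: "real N2 > 2 / \<gamma>" using reals_Archimedean2 by blast
  define N where "N = max 2 (max N1 N2)"
  have bound: "covered_fraction (HG n (n^2)) (\<C> n) \<gamma> \<le> 2 / (\<gamma> * real n)" if nN: "n \<ge> N" for n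
  proof -
    have n2: "n \<ge> 2" using nN N_def by simp
    have m1: "real n \<ge> 1" using n2 by simp
    have "N2 \<le> n" "N1 \<le> n" using nN N_def by simp_all
    then have "real N2 \<le> real n" "real N1 \<le> real n" by simp_all
    then have mg: "real n \<ge> 2 / \<gamma>" and mb: "real n > 4 * (1 + 2 / \<delta>) / \<gamma>^2"
      using N1 N2 by linarith+
    note ab = arith_bound[OF gp dp m1 mg mb]
    have t2: "n^2 \<ge> 2" using n2 by (metis power2_nat_le_imp_le le_trans one_le_numeral power2_eq_square mult_le_mono numeral_le_iff semiring_norm(69) nat_1_add_1 Suc_1 not_less_eq_eq) 
    have k1: "n \<ge> 1" using n2 by simp
    have gs: "\<gamma> * real (n^2) > 1" using ab(1) by simp
    have big: "(\<gamma> * real (n^2) - 1) * (\<gamma> * real (n^2)) / 2 > 1 + 2 * real (n * n^2) / \<delta>"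
      using ab(2) by simp
    show ?thesis
    proof (rule global_bound[where s = "n^2" and \<Delta> = "n * n^2" and r = n and \<delta> = \<delta>])
      show "simple_graph (HG n (n^2))" by (rule HG_simple)
      show "verts (HG n (n^2)) \<noteq> {}" using HG_ne[of "n^2" n] t2 by simp
      show "card D = n^2" if "D \<in> maximal_cliques (HG n (n^2))" for D
        by (rule HG_mc_card[OF t2 k1 that])
      show "card (D \<inter> D') \<le> 1" if "D \<in> maximal_cliques (HG n (n^2))" "D' \<in> maximal_cliques (HG n (n^2))" "D \<noteq> D'" for D D'
        by (rule HG_mc_pw[OF t2 k1 that])
      show "card {w. {w, u} \<in> edges (HG n (n^2))} \<le> n * n^2" if "u \<in> verts (HG n (n^2))" for u
        by (rule HG_deg[OF that])
      show "card {D \<in> maximal_cliques (HG n (n^2)). u \<in> D} \<ge> n" if "u \<in> verts (HG n (n^2))" for u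
        by (rule HG_inr[OF t2 that])
      show "n \<ge> 1" by (rule k1)
      show "\<gamma> * real (n^2) > 1" by (rule gs)
      show "(\<gamma> * real (n^2) - 1) * (\<gamma> * real (n^2)) / 2 > 1 + real (2 * (n * n^2)) / \<delta>" using big by simp
      show "\<delta> > 0" by (rule dp)
      show "\<gamma> > 0" by (rule gp)
      show "clustering (HG n (n^2)) (\<C> n)" using H n2 by blast
      show "\<forall>C\<in>\<C> n. induced_density (HG n (n^2)) C \<ge> \<delta>" using H n2 by blast
    qed
  qed
  have ev1: "eventually (\<lambda>n. covered_fraction (HG n (n^2)) (\<C> n) \<gamma> \<le> 2 / (\<gamma> * real n)) sequentially"
    using bound by (rule eventually_sequentiallyI)
  have ev0: "eventually (\<lambda>n. 0 \<le> covered_fraction (HG n (n^2)) (\<C> n) \<gamma>) sequentially"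
    by (rule always_eventually) (simp add: covered_fraction_def)
  have lim: "(\<lambda>n. 2 / (\<gamma> * real n)) \<longlonglongrightarrow> 0"
  proof -
    have "(\<lambda>n. (2 / \<gamma>) * inverse (real n)) \<longlonglongrightarrow> (2 / \<gamma>) * 0"
      by (intro tendsto_mult tendsto_const tendsto_inverse_0_at_top filterlim_real_sequentially)
    then show ?thesis by (simp add: divide_inverse mult.commute mult.left_commute)
  qed
  show "(\<lambda>n. covered_fraction (HG n (n^2)) (\<C> n) \<gamma>) \<longlonglongrightarrow> 0"
    by (rule tendsto_sandwich[OF ev0 ev1 tendsto_const lim])
qed


end
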